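(* Let $N_0\in L^\infty(\Omega)$ with $N_0\ge 0$ a.e. For $\phi,\varphi\in L^\infty(Q)$ define \[ \Theta(\phi,\varphi)(x,t)=\frac{N_0(x)+r_N\int_0^t e^{\mu_N s}e^{\alpha_H\gamma_H\int_0^s|\phi(x,\xi)|d\xi}e^{\beta_1\int_0^s|\varphi(x,\xi)|d\xi}\,ds}{e^{\mu_N t}e^{\alpha_H\gamma_H\int_0^t|\phi(x,\xi)|d\xi}e^{\beta_1\int_0^t|\varphi(x,\xi)|d\xi}},\qquad (x,t)\in Q. \] Then for any $\phi,\phi_1,\phi_2,\varphi,\varphi_1,\varphi_2\in L^\infty(Q)$: (i) $0\le\Theta(\phi,\varphi)(x,t)\le\|N_0\|_{L^\infty(\Omega)}+r_N T$ for a.e. $(x,t)\in Q$; (ii) $\|\Theta(\phi_1,\varphi_1)-\Theta(\phi_2,\varphi_2)\|_{L^\infty(Q)}\le C_1\big(\|\phi_1-\phi_2\|_{L^\infty(Q)}+\|\varphi_1-\varphi_2\|_{L^\infty(Q)}\big)$, where $C_1$ is a constant depending on $r_N,\mu_N,\beta_1,\alpha_H,\gamma_H,T$, $\|\phi_1\|_{L^\infty(Q)}$, $\|\phi_2\|_{L^\infty(Q)}$, $\|\varphi_1\|_{L^\infty(Q)}$, $\|\varphi_2\|_{L^\infty(Q)}$ and $\|N_0\|_{L^\infty(\Omega)}$.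
   Context: $\Omega\subset\mathbb{R}^2$ is a bounded domain, $0<T<\infty$, $Q=\Omega\times(0,T)$. The parameters $r_N,\mu_N,\beta_1,\alpha_H,\gamma_H$ are positive constants. *)

theory Defs
  imports "HOL-Analysis.Analysis" "HOL-Probability.Essential_Supremum"
begin

definition bounded_domain :: "(real^2) set \<Rightarrow> bool" where
  "bounded_domain \<Omega> \<longleftrightarrow> \<Omega> \<noteq> {} \<and> open \<Omega> \<and> connected \<Omega> \<and> bounded \<Omega>"

definition Linf_norm :: "'a measure \<Rightarrow> ('a \<Rightarrow> real) \<Rightarrow> real" where
  "Linf_norm M f = real_of_ereal (esssup M (\<lambda>x. ereal \<bar>f x\<bar>))"

definition in_Linf :: "('a::euclidean_space) set \<Rightarrow> ('a \<Rightarrow> real) \<Rightarrow> bool" where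
  "in_Linf S f \<longleftrightarrow> f \<in> borel_measurable borel \<and> (\<exists>C. AE x in lebesgue_on S. \<bar>f x\<bar> \<le> C)"

definition Theta ::
  "real \<Rightarrow> real \<Rightarrow> real \<Rightarrow> real \<Rightarrow> real \<Rightarrow> ((real^2) \<Rightarrow> real)
   \<Rightarrow> ((real^2) \<times> real \<Rightarrow> real) \<Rightarrow> ((real^2) \<times> real \<Rightarrow> real) \<Rightarrow> (real^2) \<times> real \<Rightarrow> real" where
  "Theta rN muN beta1 alphaH gammaH N0 phi vphi = (\<lambda>(x, t).
     (N0 x + rN * (LINT s:{0..t}|lborel.
          exp (muN * s) * exp (alphaH * gammaH * (LINT \<xi>:{0..s}|lborel. \<bar>phi (x, \<xi>)\<bar>))
                        * exp (beta1 * (LINT \<xi>:{0..s}|lborel. \<bar>vphi (x, \<xi>)\<bar>))))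
     / (exp (muN * t) * exp (alphaH * gammaH * (LINT \<xi>:{0..t}|lborel. \<bar>phi (x, \<xi>)\<bar>))
                      * exp (beta1 * (LINT \<xi>:{0..t}|lborel. \<bar>vphi (x, \<xi>)\<bar>))))"

end

theory Submission
  imports Defs
begin


lemma pair_lborel: "pair_sigma_finite (lborel::'a::euclidean_space measure) (lborel::'b::euclidean_space measure)"
  by (simp add: pair_sigma_finite.intro lborel.sigma_finite_measure_axioms)

lemma AE_sections:
  fixes S :: "('a::euclidean_space \<times> 'b::euclidean_space) set"
  assumes "AE p in lebesgue_on S. P p" "S \<in> sets lebesgue"
  shows "AE x in lborel. AE y in lborel. (x,y) \<in> S \<longrightarrow> P (x,y)"
proof -
  have "AE p in lebesgue. p \<in> S \<longrightarrow> P p"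
    using assms AE_restrict_space_iff by (metis sets.Int_space_eq2)
  then have "AE p in lborel. p \<in> S \<longrightarrow> P p" by (simp add: AE_completion_iff)
  then have "AE p in (lborel \<Otimes>\<^sub>M lborel). p \<in> S \<longrightarrow> P p" by (metis lborel_prod)
  then show ?thesis using pair_sigma_finite.AE_pair[OF pair_lborel] by fastforce
qed

lemma AE_lift:
  fixes S :: "('a::euclidean_space \<times> 'b::euclidean_space) set"
  assumes "AE x in lborel. P x" "S \<in> sets lebesgue"
  shows "AE p in lebesgue_on S. P (fst p)"
proof -
  obtain N where N: "N \<in> sets lborel" "emeasure lborel N = 0" "{x\<in>space lborel. \<not> P x} \<subseteq> N"
    using assms(1) unfolding eventually_ae_filter null_sets_def by auto
  have "AE x in (lborel::'a measure). AE y in (lborel::'b measure). fst (x,y) \<notin> N"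
    using AE_not_in[of N lborel] N by (auto simp: null_sets_def)
  then have "AE p in (lborel \<Otimes>\<^sub>M lborel::('a\<times>'b) measure). fst p \<notin> N"
  proof (intro pair_sigma_finite.AE_pair_measure[OF pair_lborel])
    have [measurable]: "N \<in> sets borel" using N(1) by simp
    show "{p \<in> space (lborel \<Otimes>\<^sub>M lborel::('a\<times>'b) measure). fst p \<notin> N} \<in> sets (lborel \<Otimes>\<^sub>M lborel)"
      by measurable
  qed
  then have "AE p in (lborel::('a\<times>'b) measure). fst p \<notin> N" by (metis lborel_prod)
  then have "AE p in (lborel::('a\<times>'b) measure). P (fst p)" by (rule AE_mp) (use N in auto)
  then have "AE p in (lebesgue::('a\<times>'b) measure). P (fst p)" by (simp add: AE_completion_iff)
  then show ?thesis using assms AE_restrict_space_iff by (metis (no_types, lifting) AE_mp AE_I2 sets.Int_space_eq2)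
qed



lemma Iint:
  fixes g :: "real \<Rightarrow> real"
  assumes g: "g \<in> borel_measurable borel" and bd: "AE y in lborel. y \<in> {0<..<T} \<longrightarrow> \<bar>g y\<bar> \<le> C"
    and s: "0 \<le> s" "s < T"
  shows "set_integrable lborel {0..s} (\<lambda>y. \<bar>g y\<bar>)"
  unfolding set_integrable_def
proof (rule integrableI_bounded_set_indicator[where B=C])
  show "AE x in lborel. x \<in> {0..s} \<longrightarrow> norm \<bar>g x\<bar> \<le> C"
  proof -
    have a0: "AE x in lborel. (x::real) \<noteq> 0" by (rule AE_lborel_singleton)
    from bd a0 show ?thesis by eventually_elim (use s in auto)
  qed
qed (use g s in \<open>auto simp: ennreal_less_top\<close>)

lemma Inonneg:
  fixes g :: "real \<Rightarrow> real"
  shows "0 \<le> (LINT y:A|lborel. \<bar>g y\<bar>)"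
  unfolding set_lebesgue_integral_def by (intro integral_nonneg_AE) (auto simp: indicator_def)

lemma Isplit:
  fixes g :: "real \<Rightarrow> real"
  assumes g: "g \<in> borel_measurable borel" and bd: "AE y in lborel. y \<in> {0<..<T} \<longrightarrow> \<bar>g y\<bar> \<le> C"
    and s: "0 \<le> s" "s \<le> s'" "s' < T"
  shows "(LINT y:{0..s'}|lborel. \<bar>g y\<bar>) = (LINT y:{0..s}|lborel. \<bar>g y\<bar>) + (LINT y:{s<..s'}|lborel. \<bar>g y\<bar>)"
proof -
  have i: "set_integrable lborel {0..s'} (\<lambda>y. \<bar>g y\<bar>)" using Iint[OF g bd] s by auto
  have "{0..s'} = {0..s} \<union> {s<..s'}" using s by auto
  then show ?thesis
    by (metis (no_types, lifting) i set_integral_Un set_integrable_subset ivl_disj_int_two(8) sets_lborel 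
        atLeastAtMost_borel greaterThanAtMost_borel  Un_upper1 Un_upper2)
qed

lemma Imono:
  fixes g :: "real \<Rightarrow> real"
  assumes g: "g \<in> borel_measurable borel" and bd: "AE y in lborel. y \<in> {0<..<T} \<longrightarrow> \<bar>g y\<bar> \<le> C"
    and s: "0 \<le> s" "s \<le> s'" "s' < T"
  shows "(LINT y:{0..s}|lborel. \<bar>g y\<bar>) \<le> (LINT y:{0..s'}|lborel. \<bar>g y\<bar>)"
  using Isplit[OF g bd s] Inonneg[of "{s<..s'}" g] by linarith

lemma Izero:
  fixes g :: "real \<Rightarrow> real"
  shows "(LINT y:{0..0}|lborel. \<bar>g y\<bar>) = 0"
  unfolding set_lebesgue_integral_def
  by (rule integral_eq_zero_AE) (use AE_lborel_singleton[of "0::real"] in \<open>auto elim!: AE_mp\<close>)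

lemma Ilip:
  fixes g1 g2 :: "real \<Rightarrow> real"
  assumes g1: "g1 \<in> borel_measurable borel" and bd1: "AE y in lborel. y \<in> {0<..<T} \<longrightarrow> \<bar>g1 y\<bar> \<le> C1"
   and g2: "g2 \<in> borel_measurable borel" and bd2: "AE y in lborel. y \<in> {0<..<T} \<longrightarrow> \<bar>g2 y\<bar> \<le> C2"
   and d: "AE y in lborel. y \<in> {0<..<T} \<longrightarrow> \<bar>g1 y - g2 y\<bar> \<le> d"
    and s: "0 \<le> s" "s \<le> s'" "s' < T"
  shows "\<bar>((LINT y:{0..s'}|lborel. \<bar>g1 y\<bar>) - (LINT y:{0..s}|lborel. \<bar>g1 y\<bar>))
          - ((LINT y:{0..s'}|lborel. \<bar>g2 y\<bar>) - (LINT y:{0..s}|lborel. \<bar>g2 y\<bar>))\<bar> \<le> (s' - s) * d"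
proof -
  have sub: "{s<..s'} \<subseteq> {0..s'}" using s by auto
  have i1: "set_integrable lborel {s<..s'} (\<lambda>y. \<bar>g1 y\<bar>)"
    using set_integrable_subset[OF Iint[OF g1 bd1] _ sub] s by auto
  have i2: "set_integrable lborel {s<..s'} (\<lambda>y. \<bar>g2 y\<bar>)"
    using set_integrable_subset[OF Iint[OF g2 bd2] _ sub] s by auto
  have ic: "set_integrable lborel {s<..s'} (\<lambda>y. d)"
    unfolding set_integrable_def by (rule integrableI_bounded_set_indicator[where B="\<bar>d\<bar>"]) (use s in \<open>auto simp: ennreal_less_top\<close>)
  have cst: "(LINT y:{s<..s'}|lborel. d) = (s' - s) * d"
    using s by (simp add: set_integral_const)
  have ae: "AE y \<in> {s<..s'} in lborel. \<bar>\<bar>g1 y\<bar> - \<bar>g2 y\<bar>\<bar> \<le> d"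
    using d by eventually_elim (use s in auto)
  have "(LINT y:{s<..s'}|lborel. \<bar>g1 y\<bar>) \<le> (LINT y:{s<..s'}|lborel. \<bar>g2 y\<bar> + d)"
    by (rule set_integral_mono_AE[OF i1 set_integral_add(1)[OF i2 ic]]) (use ae in \<open>eventually_elim, auto\<close>)
  moreover have "(LINT y:{s<..s'}|lborel. \<bar>g2 y\<bar>) \<le> (LINT y:{s<..s'}|lborel. \<bar>g1 y\<bar> + d)"
    by (rule set_integral_mono_AE[OF i2 set_integral_add(1)[OF i1 ic]]) (use ae in \<open>eventually_elim, auto\<close>)
  ultimately show ?thesis
    using Isplit[OF g1 bd1 s] Isplit[OF g2 bd2 s] set_integral_add(2)[OF i2 ic] set_integral_add(2)[OF i1 ic] cst
    by (simp add: abs_le_iff)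
qed



lemma expint:
  fixes A :: "real \<Rightarrow> real"
  assumes mono: "\<And>s s'. 0 \<le> s \<Longrightarrow> s \<le> s' \<Longrightarrow> s' \<le> t \<Longrightarrow> A s \<le> A s'" and t: "0 \<le> t"
  shows "set_integrable lborel {0..t} (\<lambda>s. exp (A s))"
proof -
  define B where "B s = exp (A (min t (max 0 s)))" for s
  have "mono B" unfolding B_def mono_def
    by (intro allI impI exp_le_cancel_iff[THEN iffD2] mono) (use t in \<open>auto simp: min_def max_def\<close>)
  hence Bm: "B \<in> borel_measurable borel" by (rule borel_measurable_mono)
  have "set_integrable lborel {0..t} B"
    unfolding set_integrable_def
  proof (rule integrableI_bounded_set_indicator[where B="exp (A t)"])
    show "AE x in lborel. x \<in> {0..t} \<longrightarrow> norm (B x) \<le> exp (A t)"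
      by (intro AE_I2 impI) (use t in \<open>auto simp: B_def intro!: mono\<close>)
  qed (use Bm t in \<open>auto simp: ennreal_less_top\<close>)
  moreover have "set_integrable lborel {0..t} B = set_integrable lborel {0..t} (\<lambda>s. exp (A s))"
    by (rule set_integrable_cong) (auto simp: B_def)
  ultimately show ?thesis by simp
qed

lemma Kbound:
  fixes A :: "real \<Rightarrow> real"
  assumes mono: "\<And>s s'. 0 \<le> s \<Longrightarrow> s \<le> s' \<Longrightarrow> s' \<le> t \<Longrightarrow> A s \<le> A s'" and t: "0 \<le> t"
  shows "0 \<le> (LINT s:{0..t}|lborel. exp (A s))" "(LINT s:{0..t}|lborel. exp (A s)) \<le> t * exp (A t)"
proof -
  show "0 \<le> (LINT s:{0..t}|lborel. exp (A s))"
    unfolding set_lebesgue_integral_def by (intro integral_nonneg_AE) (auto simp: indicator_def)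
  have ic: "set_integrable lborel {0..t} (\<lambda>s. exp (A t))"
    unfolding set_integrable_def by (rule integrableI_bounded_set_indicator[where B="exp (A t)"]) (use t in \<open>auto simp: ennreal_less_top\<close>)
  have "(LINT s:{0..t}|lborel. exp (A s)) \<le> (LINT s:{0..t}|lborel. exp (A t))"
    by (rule set_integral_mono_AE[OF expint[OF mono t] ic]) (auto intro!: AE_I2 mono)
  also have "\<dots> = t * exp (A t)" using t by (simp add: set_integral_const)
  finally show "(LINT s:{0..t}|lborel. exp (A s)) \<le> t * exp (A t)" .
qed

lemma abs_i:
  fixes A :: "real \<Rightarrow> real"
  assumes mono: "\<And>s s'. 0 \<le> s \<Longrightarrow> s \<le> s' \<Longrightarrow> s' \<le> t \<Longrightarrow> A s \<le> A s'" and t: "0 \<le> t" "t \<le> T"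
    and A0: "A 0 = 0" and N: "0 \<le> N" "N \<le> n" and r: "r > 0"
  shows "0 \<le> (N + r * (LINT s:{0..t}|lborel. exp (A s))) / exp (A t) \<and>
         (N + r * (LINT s:{0..t}|lborel. exp (A s))) / exp (A t) \<le> n + r * T"
proof -
  note K = Kbound[OF mono t(1)]
  have At: "0 \<le> A t" using mono[of 0 t] t A0 by simp
  hence e1: "1 \<le> exp (A t)" by simp
  have "N \<le> N * exp (A t)" using N e1 by (simp add: mult_le_cancel_left1)
  moreover have "r * (LINT s:{0..t}|lborel. exp (A s)) \<le> r * (t * exp (A t))"
    using K(2) r by simp
  ultimately have "(N + r * (LINT s:{0..t}|lborel. exp (A s))) \<le> N * exp (A t) + r * (t * exp (A t))"
    by simp
  also have "\<dots> = (N + r * t) * exp (A t)" by (simp add: algebra_simps)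
  finally have "(N + r * (LINT s:{0..t}|lborel. exp (A s))) / exp (A t) \<le> N + r * t"
    by (simp add: divide_le_eq)
  also have "\<dots> \<le> n + r * T" using N r t by (intro add_mono mult_left_mono) auto
  finally show ?thesis using K(1) N r by auto
qed

lemma exp_lip: "0 \<le> (u::real) \<Longrightarrow> 0 \<le> v \<Longrightarrow> \<bar>exp (- u) - exp (- v)\<bar> \<le> \<bar>u - v\<bar>"
proof -
  have key: "exp (- u) - exp (- v) \<le> v - u" if "0 \<le> u" "u \<le> v" for u v :: real
  proof -
    have "exp (- u) - exp (- v) = exp (- u) * (1 - exp (- (v - u)))"
      by (simp add: algebra_simps exp_diff[symmetric] exp_minus_inverse) (simp add: exp_add[symmetric])
    also have "\<dots> \<le> 1 * (v - u)"
    proof (rule mult_mono)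
      show "1 - exp (- (v - u)) \<le> v - u" using exp_ge_add_one_self[of "u - v"] by (simp add: algebra_simps)
    qed (use that in auto)
    finally show ?thesis by simp
  qed
  assume "0 \<le> u" "0 \<le> v"
  then show ?thesis using key[of u v] key[of v u]
    by (cases "u \<le> v") (auto simp: abs_if)
qed

lemma Krewrite:
  fixes A :: "real \<Rightarrow> real"
  shows "(N + r * (LINT s:{0..t}|lborel. exp (A s))) / exp (A t)
         = N * exp (- A t) + r * (LINT s:{0..t}|lborel. exp (- (A t - A s)))"
proof -
  have "(LINT s:{0..t}|lborel. exp (- (A t - A s))) = (LINT s:{0..t}|lborel. exp (A s) / exp (A t))"
    by (simp add: exp_diff)
  also have "\<dots> = (LINT s:{0..t}|lborel. exp (A s)) / exp (A t)" by simp
  finally have J: "(LINT s:{0..t}|lborel. exp (- (A t - A s))) = (LINT s:{0..t}|lborel. exp (A s)) / exp (A t)" .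
  show ?thesis unfolding J by (simp add: exp_minus divide_inverse distrib_right mult.assoc)
qed

lemma abs_ii:
  fixes Aa Ab :: "real \<Rightarrow> real"
  assumes mono1: "\<And>s s'. 0 \<le> s \<Longrightarrow> s \<le> s' \<Longrightarrow> s' \<le> t \<Longrightarrow> Aa s \<le> Aa s'"
    and mono2: "\<And>s s'. 0 \<le> s \<Longrightarrow> s \<le> s' \<Longrightarrow> s' \<le> t \<Longrightarrow> Ab s \<le> Ab s'"
    and t: "0 \<le> t" "t \<le> T"
    and A0: "Aa 0 = 0" "Ab 0 = 0" and N: "0 \<le> N" "N \<le> n" and r: "r > 0"
    and lip: "\<And>s. 0 \<le> s \<Longrightarrow> s \<le> t \<Longrightarrow> \<bar>(Aa t - Aa s) - (Ab t - Ab s)\<bar> \<le> T * D"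
  shows "\<bar>(N + r * (LINT s:{0..t}|lborel. exp (Aa s))) / exp (Aa t)
          - (N + r * (LINT s:{0..t}|lborel. exp (Ab s))) / exp (Ab t)\<bar> \<le> (n + r * T) * T * D"
proof -
  have TD: "0 \<le> T * D" using lip[of t] t by auto
  have i1: "set_integrable lborel {0..t} (\<lambda>s. exp (- (Aa t - Aa s)))"
  proof -
    have "set_integrable lborel {0..t} (\<lambda>s. exp (Aa s) / exp (Aa t))"
      using expint[OF mono1 t(1)] by simp
    then show ?thesis by (simp add: exp_diff)
  qed
  have i2: "set_integrable lborel {0..t} (\<lambda>s. exp (- (Ab t - Ab s)))"
  proof -
    have "set_integrable lborel {0..t} (\<lambda>s. exp (Ab s) / exp (Ab t))"
      using expint[OF mono2 t(1)] by simp
    then show ?thesis by (simp add: exp_diff)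
  qed
  have ic: "set_integrable lborel {0..t} (\<lambda>s. T * D)"
    unfolding set_integrable_def by (rule integrableI_bounded_set_indicator[where B="T * D"]) (use t TD in \<open>auto simp: ennreal_less_top\<close>)
  have cst: "(LINT s:{0..t}|lborel. T * D) = t * (T * D)" using t by (simp add: set_integral_const)
  have pw: "\<bar>exp (- (Aa t - Aa s)) - exp (- (Ab t - Ab s))\<bar> \<le> T * D" if "s \<in> {0..t}" for s
    using exp_lip[of "Aa t - Aa s" "Ab t - Ab s"] lip[of s] mono1[of s t] mono2[of s t] that by auto
  have u1: "(LINT s:{0..t}|lborel. exp (- (Aa t - Aa s))) \<le> (LINT s:{0..t}|lborel. exp (- (Ab t - Ab s)) + T * D)"
    by (rule set_integral_mono_AE[OF i1 set_integral_add(1)[OF i2 ic]]) (intro AE_I2 impI, use pw in \<open>force simp: abs_le_iff\<close>)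
  have u2: "(LINT s:{0..t}|lborel. exp (- (Ab t - Ab s))) \<le> (LINT s:{0..t}|lborel. exp (- (Aa t - Aa s)) + T * D)"
    by (rule set_integral_mono_AE[OF i2 set_integral_add(1)[OF i1 ic]]) (intro AE_I2 impI, use pw in \<open>force simp: abs_le_iff\<close>)
  have intd: "\<bar>(LINT s:{0..t}|lborel. exp (- (Aa t - Aa s))) - (LINT s:{0..t}|lborel. exp (- (Ab t - Ab s)))\<bar> \<le> t * (T * D)"
    unfolding abs_le_iff using u1 u2 set_integral_add(2)[OF i2 ic] set_integral_add(2)[OF i1 ic] cst by linarith
  have e0: "\<bar>exp (- Aa t) - exp (- Ab t)\<bar> \<le> T * D"
    using exp_lip[of "Aa t" "Ab t"] lip[of 0] mono1[of 0 t] mono2[of 0 t] t A0 by auto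
  let ?J1 = "LINT s:{0..t}|lborel. exp (- (Aa t - Aa s))"
  let ?J2 = "LINT s:{0..t}|lborel. exp (- (Ab t - Ab s))"
  have "\<bar>(N * exp (- Aa t) + r * ?J1) - (N * exp (- Ab t) + r * ?J2)\<bar>
        \<le> N * \<bar>exp (- Aa t) - exp (- Ab t)\<bar> + r * \<bar>?J1 - ?J2\<bar>"
  proof -
    have "(N * exp (- Aa t) + r * ?J1) - (N * exp (- Ab t) + r * ?J2)
          = N * (exp (- Aa t) - exp (- Ab t)) + r * (?J1 - ?J2)" by (simp add: algebra_simps)
    moreover have "\<bar>N * (exp (- Aa t) - exp (- Ab t)) + r * (?J1 - ?J2)\<bar>
       \<le> \<bar>N * (exp (- Aa t) - exp (- Ab t))\<bar> + \<bar>r * (?J1 - ?J2)\<bar>" by (rule abs_triangle_ineq)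
    ultimately show ?thesis using N r by (simp add: abs_mult)
  qed
  also have "\<dots> \<le> n * (T * D) + r * (T * (T * D))"
  proof (intro add_mono mult_mono)
    show "\<bar>?J1 - ?J2\<bar> \<le> T * (T * D)" using intd t TD by (meson mult_right_mono order_trans)
  qed (use N r e0 TD in auto)
  also have "\<dots> = (n + r * T) * T * D" by (simp add: algebra_simps)
  finally show ?thesis by (simp only: Krewrite)
qed



lemma Linf_nonneg: "0 \<le> Linf_norm M f"
proof (cases "(\<lambda>x. ereal \<bar>f x\<bar>) \<in> borel_measurable M")
  case False
  then show ?thesis by (simp add: Linf_norm_def esssup_non_measurable top_ereal_def)
next
  case True
  show ?thesis
  proof (cases "emeasure M (space M) = 0")
    case True
    then show ?thesis using \<open>(\<lambda>x. ereal \<bar>f x\<bar>) \<in> borel_measurable M\<close> by (simp add: Linf_norm_def esssup_zero_space)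
  next
    case False
    have "esssup M (\<lambda>x. ereal 0) \<le> esssup M (\<lambda>x. ereal \<bar>f x\<bar>)"
      by (rule esssup_mono) auto
    then have "0 \<le> esssup M (\<lambda>x. ereal \<bar>f x\<bar>)" using esssup_const[OF False, of "ereal 0"] by (simp add: zero_ereal_def)
    then show ?thesis unfolding Linf_norm_def by (simp add: real_of_ereal_pos)
  qed
qed

lemma Linf_AE:
  assumes "(\<lambda>x. ereal \<bar>f x\<bar>) \<in> borel_measurable M" "AE x in M. \<bar>f x\<bar> \<le> C"
  shows "AE x in M. \<bar>f x\<bar> \<le> Linf_norm M f"
proof -
  have le: "esssup M (\<lambda>x. ereal \<bar>f x\<bar>) \<le> ereal C"
    using assms by (intro esssup_I) auto
  show ?thesis using esssup_AE[of "\<lambda>x. ereal \<bar>f x\<bar>" M]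
  proof eventually_elim
    case (elim x)
    then show ?case using le unfolding Linf_norm_def
      by (cases "esssup M (\<lambda>x. ereal \<bar>f x\<bar>)") auto
  qed
qed

lemma Linf_le:
  assumes "AE x in M. \<bar>f x\<bar> \<le> B" "0 \<le> B"
  shows "Linf_norm M f \<le> B"
proof (cases "(\<lambda>x. ereal \<bar>f x\<bar>) \<in> borel_measurable M")
  case False
  then show ?thesis using assms by (simp add: Linf_norm_def esssup_non_measurable top_ereal_def)
next
  case True
  have le: "esssup M (\<lambda>x. ereal \<bar>f x\<bar>) \<le> ereal B"
    using assms True by (intro esssup_I) auto
  then show ?thesis unfolding Linf_norm_def using assms(2)
    by (cases "esssup M (\<lambda>x. ereal \<bar>f x\<bar>)") auto
qed

lemma meas_leb_on:
  fixes f :: "'a::euclidean_space \<Rightarrow> real"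
  assumes "f \<in> borel_measurable borel"
  shows "(\<lambda>x. ereal \<bar>f x\<bar>) \<in> borel_measurable (lebesgue_on S)"
proof -
  have "f \<in> borel_measurable lebesgue" using assms
  proof -
    have "f \<in> borel_measurable lborel" using assms by simp
    then show ?thesis by (rule measurable_completion)
  qed
  then have "f \<in> borel_measurable (lebesgue_on S)" by (rule measurable_restrict_space1)
  then show ?thesis by measurable
qed

lemma sec_meas:
  fixes phi :: "'a::euclidean_space \<times> 'b::euclidean_space \<Rightarrow> real"
  assumes "phi \<in> borel_measurable borel"
  shows "(\<lambda>y. phi (x, y)) \<in> borel_measurable borel"
proof -
  have "(\<lambda>y. (x, y)) \<in> borel_measurable (borel :: 'b measure)"
    by (intro borel_measurable_continuous_onI continuous_intros)
  then show ?thesis using measurable_compose assms by blast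
qed



lemma pt_i:
  fixes g h :: "real \<Rightarrow> real"
  assumes g: "g \<in> borel_measurable borel" and bg: "AE y in lborel. y \<in> {0<..<T} \<longrightarrow> \<bar>g y\<bar> \<le> Cg"
    and h: "h \<in> borel_measurable borel" and bh: "AE y in lborel. y \<in> {0<..<T} \<longrightarrow> \<bar>h y\<bar> \<le> Ch"
    and t: "0 < t" "t < T" and N: "0 \<le> N" "N \<le> n" and par: "r > 0" "mu > 0" "a > 0" "b > 0"
  shows "0 \<le> (N + r * (LINT s:{0..t}|lborel. exp (mu * s) * exp (a * (LINT y:{0..s}|lborel. \<bar>g y\<bar>))
                   * exp (b * (LINT y:{0..s}|lborel. \<bar>h y\<bar>))))
            / (exp (mu * t) * exp (a * (LINT y:{0..t}|lborel. \<bar>g y\<bar>)) * exp (b * (LINT y:{0..t}|lborel. \<bar>h y\<bar>)))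
       \<and> (N + r * (LINT s:{0..t}|lborel. exp (mu * s) * exp (a * (LINT y:{0..s}|lborel. \<bar>g y\<bar>))
                   * exp (b * (LINT y:{0..s}|lborel. \<bar>h y\<bar>))))
            / (exp (mu * t) * exp (a * (LINT y:{0..t}|lborel. \<bar>g y\<bar>)) * exp (b * (LINT y:{0..t}|lborel. \<bar>h y\<bar>)))
          \<le> n + r * T"
proof -
  define A where "A s = mu * s + a * (LINT y:{0..s}|lborel. \<bar>g y\<bar>) + b * (LINT y:{0..s}|lborel. \<bar>h y\<bar>)" for s
  have E: "exp (mu * s) * exp (a * (LINT y:{0..s}|lborel. \<bar>g y\<bar>)) * exp (b * (LINT y:{0..s}|lborel. \<bar>h y\<bar>)) = exp (A s)" for s
    by (simp add: A_def exp_add)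
  have mono: "A s \<le> A s'" if "0 \<le> s" "s \<le> s'" "s' \<le> t" for s s'
  proof -
    have "s' < T" using that t by auto
    then show ?thesis unfolding A_def using Imono[OF g bg that(1,2)] Imono[OF h bh that(1,2)] that par
      by (intro add_mono mult_left_mono) auto
  qed
  have A0: "A 0 = 0" by (simp add: A_def Izero[simplified])
  show ?thesis unfolding E
    by (rule abs_i[where A=A and t=t and T=T and N=N and n=n and r=r]) (use mono A0 N par t in auto)
qed

lemma pt_ii:
  fixes ga gb ha hb :: "real \<Rightarrow> real"
  assumes ga: "ga \<in> borel_measurable borel" and bga: "AE y in lborel. y \<in> {0<..<T} \<longrightarrow> \<bar>ga y\<bar> \<le> Cga"
    and gb: "gb \<in> borel_measurable borel" and bgb: "AE y in lborel. y \<in> {0<..<T} \<longrightarrow> \<bar>gb y\<bar> \<le> Cgb"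
    and ha: "ha \<in> borel_measurable borel" and bha: "AE y in lborel. y \<in> {0<..<T} \<longrightarrow> \<bar>ha y\<bar> \<le> Cha"
    and hb: "hb \<in> borel_measurable borel" and bhb: "AE y in lborel. y \<in> {0<..<T} \<longrightarrow> \<bar>hb y\<bar> \<le> Chb"
    and dg: "AE y in lborel. y \<in> {0<..<T} \<longrightarrow> \<bar>ga y - gb y\<bar> \<le> da"
    and dh: "AE y in lborel. y \<in> {0<..<T} \<longrightarrow> \<bar>ha y - hb y\<bar> \<le> db"
    and d: "0 \<le> da" "0 \<le> db"
    and t: "0 < t" "t < T" and N: "0 \<le> N" "N \<le> n" and par: "r > 0" "mu > 0" "a > 0" "b > 0"
  shows "\<bar>(N + r * (LINT s:{0..t}|lborel. exp (mu * s) * exp (a * (LINT y:{0..s}|lborel. \<bar>ga y\<bar>))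
                   * exp (b * (LINT y:{0..s}|lborel. \<bar>ha y\<bar>))))
            / (exp (mu * t) * exp (a * (LINT y:{0..t}|lborel. \<bar>ga y\<bar>)) * exp (b * (LINT y:{0..t}|lborel. \<bar>ha y\<bar>)))
       - (N + r * (LINT s:{0..t}|lborel. exp (mu * s) * exp (a * (LINT y:{0..s}|lborel. \<bar>gb y\<bar>))
                   * exp (b * (LINT y:{0..s}|lborel. \<bar>hb y\<bar>))))
            / (exp (mu * t) * exp (a * (LINT y:{0..t}|lborel. \<bar>gb y\<bar>)) * exp (b * (LINT y:{0..t}|lborel. \<bar>hb y\<bar>)))\<bar>
          \<le> (n + r * T) * T * (a * da + b * db)"
proof -
  define A1 where "A1 s = mu * s + a * (LINT y:{0..s}|lborel. \<bar>ga y\<bar>) + b * (LINT y:{0..s}|lborel. \<bar>ha y\<bar>)" for s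
  define A2 where "A2 s = mu * s + a * (LINT y:{0..s}|lborel. \<bar>gb y\<bar>) + b * (LINT y:{0..s}|lborel. \<bar>hb y\<bar>)" for s
  have E1: "exp (mu * s) * exp (a * (LINT y:{0..s}|lborel. \<bar>ga y\<bar>)) * exp (b * (LINT y:{0..s}|lborel. \<bar>ha y\<bar>)) = exp (A1 s)" for s
    by (simp add: A1_def exp_add)
  have E2: "exp (mu * s) * exp (a * (LINT y:{0..s}|lborel. \<bar>gb y\<bar>)) * exp (b * (LINT y:{0..s}|lborel. \<bar>hb y\<bar>)) = exp (A2 s)" for s
    by (simp add: A2_def exp_add)
  have mono1: "A1 s \<le> A1 s'" if "0 \<le> s" "s \<le> s'" "s' \<le> t" for s s'
  proof -
    have "s' < T" using that t by auto
    then show ?thesis unfolding A1_def using Imono[OF ga bga that(1,2)] Imono[OF ha bha that(1,2)] that par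
      by (intro add_mono mult_left_mono) auto
  qed
  have mono2: "A2 s \<le> A2 s'" if "0 \<le> s" "s \<le> s'" "s' \<le> t" for s s'
  proof -
    have "s' < T" using that t by auto
    then show ?thesis unfolding A2_def using Imono[OF gb bgb that(1,2)] Imono[OF hb bhb that(1,2)] that par
      by (intro add_mono mult_left_mono) auto
  qed
  have A0: "A1 0 = 0" "A2 0 = 0" by (simp_all add: A1_def A2_def Izero[simplified])
  have lip: "\<bar>(A1 t - A1 s) - (A2 t - A2 s)\<bar> \<le> T * (a * da + b * db)" if "0 \<le> s" "s \<le> t" for s
  proof -
    let ?G1 = "(LINT y:{0..t}|lborel. \<bar>ga y\<bar>) - (LINT y:{0..s}|lborel. \<bar>ga y\<bar>)"
    let ?G2 = "(LINT y:{0..t}|lborel. \<bar>gb y\<bar>) - (LINT y:{0..s}|lborel. \<bar>gb y\<bar>)"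
    let ?H1 = "(LINT y:{0..t}|lborel. \<bar>ha y\<bar>) - (LINT y:{0..s}|lborel. \<bar>ha y\<bar>)"
    let ?H2 = "(LINT y:{0..t}|lborel. \<bar>hb y\<bar>) - (LINT y:{0..s}|lborel. \<bar>hb y\<bar>)"
    have lg: "\<bar>?G1 - ?G2\<bar> \<le> (t - s) * da" by (rule Ilip[OF ga bga gb bgb dg that t(2)])
    have lh: "\<bar>?H1 - ?H2\<bar> \<le> (t - s) * db" by (rule Ilip[OF ha bha hb bhb dh that t(2)])
    have eq: "(A1 t - A1 s) - (A2 t - A2 s) = a * (?G1 - ?G2) + b * (?H1 - ?H2)"
      by (simp add: A1_def A2_def algebra_simps)
    have "\<bar>a * (?G1 - ?G2) + b * (?H1 - ?H2)\<bar> \<le> \<bar>a * (?G1 - ?G2)\<bar> + \<bar>b * (?H1 - ?H2)\<bar>"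
      by (rule abs_triangle_ineq)
    also have "\<dots> = a * \<bar>?G1 - ?G2\<bar> + b * \<bar>?H1 - ?H2\<bar>" using par by (simp add: abs_mult)
    also have "\<dots> \<le> a * ((t - s) * da) + b * ((t - s) * db)"
      using lg lh par by (intro add_mono mult_left_mono) auto
    also have "\<dots> \<le> a * (T * da) + b * (T * db)"
      using par d that t by (intro add_mono mult_left_mono mult_right_mono) auto
    also have "\<dots> = T * (a * da + b * db)" by (simp add: algebra_simps)
    finally show ?thesis using eq by simp
  qed
  show ?thesis unfolding E1 E2
    by (rule abs_ii[where Aa=A1 and Ab=A2 and t=t and T=T and N=N and n=n and r=r and D="a * da + b * db"])
       (use mono1 mono2 A0 N par t lip in auto)
qed



lemma open_sets_leb: "open (S :: 'a::euclidean_space set) \<Longrightarrow> S \<in> sets lebesgue"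
  by (simp add: borel_open sets_completionI_sets)

lemma to_lborel:
  assumes "AE x in lebesgue_on S. P x" "S \<in> sets lebesgue"
  shows "AE x in lborel. x \<in> S \<longrightarrow> P x"
proof -
  have "AE x in lebesgue. x \<in> S \<longrightarrow> P x"
    using assms AE_restrict_space_iff by (metis sets.Int_space_eq2)
  then show ?thesis by (simp add: AE_completion_iff)
qed

lemma AE_in_space: "AE p in lebesgue_on S. p \<in> S"
  by (rule AE_I2) (simp add: space_restrict_space)

lemma Theta_eq: "Theta rN muN beta1 alphaH gammaH N0 phi vphi (x, t) =
     (N0 x + rN * (LINT s:{0..t}|lborel.
          exp (muN * s) * exp (alphaH * gammaH * (LINT \<xi>:{0..s}|lborel. \<bar>phi (x, \<xi>)\<bar>))
                        * exp (beta1 * (LINT \<xi>:{0..s}|lborel. \<bar>vphi (x, \<xi>)\<bar>))))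
     / (exp (muN * t) * exp (alphaH * gammaH * (LINT \<xi>:{0..t}|lborel. \<bar>phi (x, \<xi>)\<bar>))
                      * exp (beta1 * (LINT \<xi>:{0..t}|lborel. \<bar>vphi (x, \<xi>)\<bar>)))"
  by (simp add: Theta_def)

lemma sec_bound:
  assumes "AE x in lborel. AE y in lborel. (x, y) \<in> \<Omega> \<times> {0<..<T} \<longrightarrow> P x y"
  shows "AE x in lborel. x \<in> \<Omega> \<longrightarrow> (AE y in lborel. y \<in> {0<..<T} \<longrightarrow> P x y)"
  using assms by eventually_elim auto

lemma part_i:
  fixes rN muN beta1 alphaH gammaH T :: real
  assumes par: "rN > 0" "muN > 0" "beta1 > 0" "alphaH > 0" "gammaH > 0" "T > 0"
    and H: "bounded_domain \<Omega>" "in_Linf \<Omega> N0" "AE x in lebesgue_on \<Omega>. N0 x \<ge> 0"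
       "in_Linf (\<Omega> \<times> {0<..<T}) phi" "in_Linf (\<Omega> \<times> {0<..<T}) vphi"
  shows "AE p in lebesgue_on (\<Omega> \<times> {0<..<T}).
          0 \<le> Theta rN muN beta1 alphaH gammaH N0 phi vphi p \<and>
          Theta rN muN beta1 alphaH gammaH N0 phi vphi p \<le> Linf_norm (lebesgue_on \<Omega>) N0 + rN * T"
proof -
  define n0 where "n0 = Linf_norm (lebesgue_on \<Omega>) N0"
  have Os: "\<Omega> \<in> sets lebesgue" using H(1) by (simp add: bounded_domain_def open_sets_leb)
  have Qs: "\<Omega> \<times> {0<..<T} \<in> sets lebesgue" using H(1)
    by (intro open_sets_leb open_Times) (auto simp: bounded_domain_def)
  obtain CN where N0m: "N0 \<in> borel_measurable borel" and CN: "AE x in lebesgue_on \<Omega>. \<bar>N0 x\<bar> \<le> CN"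
    using H(2) unfolding in_Linf_def by auto
  obtain Cp where phim: "phi \<in> borel_measurable borel" and Cp: "AE p in lebesgue_on (\<Omega> \<times> {0<..<T}). \<bar>phi p\<bar> \<le> Cp"
    using H(4) unfolding in_Linf_def by auto
  obtain Cv where vphim: "vphi \<in> borel_measurable borel" and Cv: "AE p in lebesgue_on (\<Omega> \<times> {0<..<T}). \<bar>vphi p\<bar> \<le> Cv"
    using H(5) unfolding in_Linf_def by auto
  have N0b: "AE x in lebesgue_on \<Omega>. \<bar>N0 x\<bar> \<le> n0"
    unfolding n0_def by (rule Linf_AE[OF meas_leb_on[OF N0m] CN])
  have a1: "AE x in lborel. x \<in> \<Omega> \<longrightarrow> 0 \<le> N0 x \<and> \<bar>N0 x\<bar> \<le> n0"
    by (rule to_lborel[OF _ Os]) (use H(3) N0b in \<open>eventually_elim, auto\<close>)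
  have a2: "AE x in lborel. x \<in> \<Omega> \<longrightarrow> (AE y in lborel. y \<in> {0<..<T} \<longrightarrow> \<bar>phi (x, y)\<bar> \<le> Cp)"
    by (rule sec_bound[OF AE_sections[OF Cp Qs]])
  have a3: "AE x in lborel. x \<in> \<Omega> \<longrightarrow> (AE y in lborel. y \<in> {0<..<T} \<longrightarrow> \<bar>vphi (x, y)\<bar> \<le> Cv)"
    by (rule sec_bound[OF AE_sections[OF Cv Qs]])
  have good: "AE x in lborel. x \<in> \<Omega> \<longrightarrow> (\<forall>t\<in>{0<..<T}. 0 \<le> Theta rN muN beta1 alphaH gammaH N0 phi vphi (x, t) \<and>
          Theta rN muN beta1 alphaH gammaH N0 phi vphi (x, t) \<le> n0 + rN * T)"
    using a1 a2 a3
  proof eventually_elim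
    case (elim x)
    show ?case
    proof (intro impI ballI)
      fix t :: real assume x: "x \<in> \<Omega>" and t: "t \<in> {0<..<T}"
      show "0 \<le> Theta rN muN beta1 alphaH gammaH N0 phi vphi (x, t) \<and>
          Theta rN muN beta1 alphaH gammaH N0 phi vphi (x, t) \<le> n0 + rN * T"
        unfolding Theta_eq
        by (rule pt_i[where g="\<lambda>y. phi (x, y)" and h="\<lambda>y. vphi (x, y)" and T=T and Cg=Cp and Ch=Cv
                and t=t and N="N0 x" and n=n0 and r=rN and mu=muN and a="alphaH * gammaH" and b=beta1])
           (use elim x t par sec_meas[OF phim] sec_meas[OF vphim] in auto)
    qed
  qed
  have "AE p in lebesgue_on (\<Omega> \<times> {0<..<T}). fst p \<in> \<Omega> \<longrightarrow> (\<forall>t\<in>{0<..<T}. 0 \<le> Theta rN muN beta1 alphaH gammaH N0 phi vphi (fst p, t) \<and>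
          Theta rN muN beta1 alphaH gammaH N0 phi vphi (fst p, t) \<le> n0 + rN * T)"
    by (rule AE_lift[OF good Qs])
  then show ?thesis using AE_in_space[of "\<Omega> \<times> {0<..<T}"] unfolding n0_def[symmetric]
    by eventually_elim (auto simp: mem_Times_iff)
qed

lemma part_ii:
  fixes rN muN beta1 alphaH gammaH T :: real
  assumes par: "rN > 0" "muN > 0" "beta1 > 0" "alphaH > 0" "gammaH > 0" "T > 0"
    and H: "bounded_domain \<Omega>" "in_Linf \<Omega> N0" "AE x in lebesgue_on \<Omega>. N0 x \<ge> 0"
       "in_Linf (\<Omega> \<times> {0<..<T}) phi1" "in_Linf (\<Omega> \<times> {0<..<T}) phi2"
       "in_Linf (\<Omega> \<times> {0<..<T}) vphi1" "in_Linf (\<Omega> \<times> {0<..<T}) vphi2"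
  shows "Linf_norm (lebesgue_on (\<Omega> \<times> {0<..<T})) (\<lambda>p. Theta rN muN beta1 alphaH gammaH N0 phi1 vphi1 p
                         - Theta rN muN beta1 alphaH gammaH N0 phi2 vphi2 p)
        \<le> (Linf_norm (lebesgue_on \<Omega>) N0 + rN * T) * T * (alphaH * gammaH + beta1)
          * (Linf_norm (lebesgue_on (\<Omega> \<times> {0<..<T})) (\<lambda>p. phi1 p - phi2 p)
             + Linf_norm (lebesgue_on (\<Omega> \<times> {0<..<T})) (\<lambda>p. vphi1 p - vphi2 p))"
proof -
  define n0 where "n0 = Linf_norm (lebesgue_on \<Omega>) N0"
  define d1 where "d1 = Linf_norm (lebesgue_on (\<Omega> \<times> {0<..<T})) (\<lambda>p. phi1 p - phi2 p)"
  define d2 where "d2 = Linf_norm (lebesgue_on (\<Omega> \<times> {0<..<T})) (\<lambda>p. vphi1 p - vphi2 p)"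
  have d: "0 \<le> d1" "0 \<le> d2" "0 \<le> n0" unfolding d1_def d2_def n0_def by (simp_all add: Linf_nonneg)
  have Os: "\<Omega> \<in> sets lebesgue" using H(1) by (simp add: bounded_domain_def open_sets_leb)
  have Qs: "\<Omega> \<times> {0<..<T} \<in> sets lebesgue" using H(1)
    by (intro open_sets_leb open_Times) (auto simp: bounded_domain_def)
  obtain CN where N0m: "N0 \<in> borel_measurable borel" and CN: "AE x in lebesgue_on \<Omega>. \<bar>N0 x\<bar> \<le> CN"
    using H(2) unfolding in_Linf_def by auto
  obtain Cp1 where phim1: "phi1 \<in> borel_measurable borel" and Cp1: "AE p in lebesgue_on (\<Omega> \<times> {0<..<T}). \<bar>phi1 p\<bar> \<le> Cp1"
    using H(4) unfolding in_Linf_def by auto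
  obtain Cp2 where phim2: "phi2 \<in> borel_measurable borel" and Cp2: "AE p in lebesgue_on (\<Omega> \<times> {0<..<T}). \<bar>phi2 p\<bar> \<le> Cp2"
    using H(5) unfolding in_Linf_def by auto
  obtain Cv1 where vphim1: "vphi1 \<in> borel_measurable borel" and Cv1: "AE p in lebesgue_on (\<Omega> \<times> {0<..<T}). \<bar>vphi1 p\<bar> \<le> Cv1"
    using H(6) unfolding in_Linf_def by auto
  obtain Cv2 where vphim2: "vphi2 \<in> borel_measurable borel" and Cv2: "AE p in lebesgue_on (\<Omega> \<times> {0<..<T}). \<bar>vphi2 p\<bar> \<le> Cv2"
    using H(7) unfolding in_Linf_def by auto
  have N0b: "AE x in lebesgue_on \<Omega>. \<bar>N0 x\<bar> \<le> n0"
    unfolding n0_def by (rule Linf_AE[OF meas_leb_on[OF N0m] CN])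
  have dpm: "(\<lambda>p. phi1 p - phi2 p) \<in> borel_measurable borel" using phim1 phim2 by measurable
  have dvm: "(\<lambda>p. vphi1 p - vphi2 p) \<in> borel_measurable borel" using vphim1 vphim2 by measurable
  have Dp: "AE p in lebesgue_on (\<Omega> \<times> {0<..<T}). \<bar>phi1 p - phi2 p\<bar> \<le> d1"
    unfolding d1_def by (rule Linf_AE[OF meas_leb_on[OF dpm], where C="Cp1 + Cp2"]) (use Cp1 Cp2 in \<open>eventually_elim, auto\<close>)
  have Dv: "AE p in lebesgue_on (\<Omega> \<times> {0<..<T}). \<bar>vphi1 p - vphi2 p\<bar> \<le> d2"
    unfolding d2_def by (rule Linf_AE[OF meas_leb_on[OF dvm], where C="Cv1 + Cv2"]) (use Cv1 Cv2 in \<open>eventually_elim, auto\<close>)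
  have a1: "AE x in lborel. x \<in> \<Omega> \<longrightarrow> 0 \<le> N0 x \<and> \<bar>N0 x\<bar> \<le> n0"
    by (rule to_lborel[OF _ Os]) (use H(3) N0b in \<open>eventually_elim, auto\<close>)
  note b1 = sec_bound[OF AE_sections[OF Cp1 Qs]]
  note b2 = sec_bound[OF AE_sections[OF Cp2 Qs]]
  note b3 = sec_bound[OF AE_sections[OF Cv1 Qs]]
  note b4 = sec_bound[OF AE_sections[OF Cv2 Qs]]
  note b5 = sec_bound[OF AE_sections[OF Dp Qs]]
  note b6 = sec_bound[OF AE_sections[OF Dv Qs]]
  define B where "B = (n0 + rN * T) * T * (alphaH * gammaH * d1 + beta1 * d2)"
  have good: "AE x in lborel. x \<in> \<Omega> \<longrightarrow> (\<forall>t\<in>{0<..<T}.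
     \<bar>Theta rN muN beta1 alphaH gammaH N0 phi1 vphi1 (x, t) - Theta rN muN beta1 alphaH gammaH N0 phi2 vphi2 (x, t)\<bar> \<le> B)"
    using a1 b1 b2 b3 b4 b5 b6
  proof eventually_elim
    case (elim x)
    show ?case
    proof (intro impI ballI)
      fix t :: real assume x: "x \<in> \<Omega>" and t: "t \<in> {0<..<T}"
      show "\<bar>Theta rN muN beta1 alphaH gammaH N0 phi1 vphi1 (x, t) - Theta rN muN beta1 alphaH gammaH N0 phi2 vphi2 (x, t)\<bar> \<le> B"
        unfolding Theta_eq B_def
        by (rule pt_ii[where ga="\<lambda>y. phi1 (x, y)" and gb="\<lambda>y. phi2 (x, y)"
                and ha="\<lambda>y. vphi1 (x, y)" and hb="\<lambda>y. vphi2 (x, y)" and T=T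
                and Cga=Cp1 and Cgb=Cp2 and Cha=Cv1 and Chb=Cv2 and da=d1 and db=d2
                and t=t and N="N0 x" and n=n0 and r=rN and mu=muN and a="alphaH * gammaH" and b=beta1])
           (use elim x t par d sec_meas[OF phim1] sec_meas[OF phim2] sec_meas[OF vphim1] sec_meas[OF vphim2] in auto)
    qed
  qed
  have "AE p in lebesgue_on (\<Omega> \<times> {0<..<T}). fst p \<in> \<Omega> \<longrightarrow> (\<forall>t\<in>{0<..<T}.
     \<bar>Theta rN muN beta1 alphaH gammaH N0 phi1 vphi1 (fst p, t) - Theta rN muN beta1 alphaH gammaH N0 phi2 vphi2 (fst p, t)\<bar> \<le> B)"
    by (rule AE_lift[OF good Qs])
  then have ae: "AE p in lebesgue_on (\<Omega> \<times> {0<..<T}).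
     \<bar>Theta rN muN beta1 alphaH gammaH N0 phi1 vphi1 p - Theta rN muN beta1 alphaH gammaH N0 phi2 vphi2 p\<bar> \<le> B"
    using AE_in_space[of "\<Omega> \<times> {0<..<T}"]
    by eventually_elim (auto simp: mem_Times_iff)
  have K: "0 \<le> (n0 + rN * T) * T" using d par by simp
  have "alphaH * gammaH * d1 + beta1 * d2 \<le> (alphaH * gammaH + beta1) * (d1 + d2)"
    using d par by (simp add: algebra_simps)
  then have BB: "B \<le> (n0 + rN * T) * T * (alphaH * gammaH + beta1) * (d1 + d2)"
    unfolding B_def using mult_left_mono[OF _ K] by (simp add: mult.assoc)
  have B0: "0 \<le> B" unfolding B_def using d par by simp
  have "Linf_norm (lebesgue_on (\<Omega> \<times> {0<..<T})) (\<lambda>p. Theta rN muN beta1 alphaH gammaH N0 phi1 vphi1 p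
                         - Theta rN muN beta1 alphaH gammaH N0 phi2 vphi2 p) \<le> B"
    by (rule Linf_le[OF ae B0])
  then show ?thesis using BB unfolding n0_def d1_def d2_def by linarith
qed


theorem lemma4:
  fixes rN muN beta1 alphaH gammaH T :: real
  assumes "rN > 0" "muN > 0" "beta1 > 0" "alphaH > 0" "gammaH > 0" "T > 0"
  shows
   "(\<forall>(\<Omega>::(real^2) set) N0 phi vphi.
       bounded_domain \<Omega> \<and> in_Linf \<Omega> N0 \<and> (AE x in lebesgue_on \<Omega>. N0 x \<ge> 0)
       \<and> in_Linf (\<Omega> \<times> {0<..<T}) phi \<and> in_Linf (\<Omega> \<times> {0<..<T}) vphi \<longrightarrow>
       (AE p in lebesgue_on (\<Omega> \<times> {0<..<T}).
          0 \<le> Theta rN muN beta1 alphaH gammaH N0 phi vphi p \<and>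
          Theta rN muN beta1 alphaH gammaH N0 phi vphi p \<le> Linf_norm (lebesgue_on \<Omega>) N0 + rN * T))
    \<and>
    (\<exists>C1 :: real \<Rightarrow> real \<Rightarrow> real \<Rightarrow> real \<Rightarrow> real \<Rightarrow> real.
     \<forall>(\<Omega>::(real^2) set) N0 phi1 phi2 vphi1 vphi2.
       bounded_domain \<Omega> \<and> in_Linf \<Omega> N0 \<and> (AE x in lebesgue_on \<Omega>. N0 x \<ge> 0)
       \<and> in_Linf (\<Omega> \<times> {0<..<T}) phi1 \<and> in_Linf (\<Omega> \<times> {0<..<T}) phi2
       \<and> in_Linf (\<Omega> \<times> {0<..<T}) vphi1 \<and> in_Linf (\<Omega> \<times> {0<..<T}) vphi2 \<longrightarrow>
       (let Q = lebesgue_on (\<Omega> \<times> {0<..<T}) in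
        Linf_norm Q (\<lambda>p. Theta rN muN beta1 alphaH gammaH N0 phi1 vphi1 p
                         - Theta rN muN beta1 alphaH gammaH N0 phi2 vphi2 p)
        \<le> C1 (Linf_norm Q phi1) (Linf_norm Q phi2) (Linf_norm Q vphi1) (Linf_norm Q vphi2)
              (Linf_norm (lebesgue_on \<Omega>) N0)
          * (Linf_norm Q (\<lambda>p. phi1 p - phi2 p) + Linf_norm Q (\<lambda>p. vphi1 p - vphi2 p))))"
proof (intro conjI allI impI)
  fix \<Omega> :: "(real^2) set" and N0 phi vphi
  assume "bounded_domain \<Omega> \<and> in_Linf \<Omega> N0 \<and> (AE x in lebesgue_on \<Omega>. N0 x \<ge> 0)
       \<and> in_Linf (\<Omega> \<times> {0<..<T}) phi \<and> in_Linf (\<Omega> \<times> {0<..<T}) vphi"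
  then show "AE p in lebesgue_on (\<Omega> \<times> {0<..<T}).
          0 \<le> Theta rN muN beta1 alphaH gammaH N0 phi vphi p \<and>
          Theta rN muN beta1 alphaH gammaH N0 phi vphi p \<le> Linf_norm (lebesgue_on \<Omega>) N0 + rN * T"
    using part_i[OF assms] by blast
next
  show "\<exists>C1 :: real \<Rightarrow> real \<Rightarrow> real \<Rightarrow> real \<Rightarrow> real \<Rightarrow> real.
     \<forall>(\<Omega>::(real^2) set) N0 phi1 phi2 vphi1 vphi2.
       bounded_domain \<Omega> \<and> in_Linf \<Omega> N0 \<and> (AE x in lebesgue_on \<Omega>. N0 x \<ge> 0)
       \<and> in_Linf (\<Omega> \<times> {0<..<T}) phi1 \<and> in_Linf (\<Omega> \<times> {0<..<T}) phi2
       \<and> in_Linf (\<Omega> \<times> {0<..<T}) vphi1 \<and> in_Linf (\<Omega> \<times> {0<..<T}) vphi2 \<longrightarrow>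
       (let Q = lebesgue_on (\<Omega> \<times> {0<..<T}) in
        Linf_norm Q (\<lambda>p. Theta rN muN beta1 alphaH gammaH N0 phi1 vphi1 p
                         - Theta rN muN beta1 alphaH gammaH N0 phi2 vphi2 p)
        \<le> C1 (Linf_norm Q phi1) (Linf_norm Q phi2) (Linf_norm Q vphi1) (Linf_norm Q vphi2)
              (Linf_norm (lebesgue_on \<Omega>) N0)
          * (Linf_norm Q (\<lambda>p. phi1 p - phi2 p) + Linf_norm Q (\<lambda>p. vphi1 p - vphi2 p)))"
    by (rule exI[where x="\<lambda>_ _ _ _ n0. (n0 + rN * T) * T * (alphaH * gammaH + beta1)"])
       (use part_ii[OF assms] in \<open>auto simp: Let_def\<close>)
qed

end
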